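(* There exists $\alpha_0 = \alpha_0(n) > 1$ such that for every $\alpha_n \ge \alpha_0$ the following holds. There exists a set $\mathcal{E}_0 \subseteq \mathcal{E}$ with the property that for every $K \in \mathcal{K}$ there is an $E \in \mathcal{E}_0$ with $$\alpha_n^{-1}K \subseteq E \subseteq \alpha_n K, \qquad (\ast)$$ and such that $\mathcal{E}_0$ can be partitioned into at most $C(n,\alpha_n)$ classes ("colours"), $C(n,\alpha_n)$ a finite number depending only on $n$ and $\alpha_n$, in such a way that every $K \in \mathcal{K}$ satisfies $(\ast)$ for at most one $E \in \mathcal{E}_0$ of any given colour.
   Context: $\mathcal{E}$ denotes the class of centred ellipsoids in $\mathbb{R}^n$, i.e. images $A(\mathbb{B})$ of the closed unit ball $\mathbb{B}$ under invertible linear maps $A$. $\mathcal{K}$ denotes the class of centrally symmetric convex bodies in $\mathbb{R}^n$. *)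

theory Defs
  imports "HOL-Analysis.Analysis"
begin

definition centred_ellipsoids :: "'a::euclidean_space set set" where
  "centred_ellipsoids = {A ` cball 0 1 | A :: 'a \<Rightarrow> 'a. linear A \<and> bij A}"

definition sym_convex_bodies :: "'a::euclidean_space set set" where
  "sym_convex_bodies = {K. compact K \<and> convex K \<and> interior K \<noteq> {} \<and> (\<forall>x\<in>K. - x \<in> K)}"

definition sandwiched :: "real \<Rightarrow> 'a::real_vector set \<Rightarrow> 'a set \<Rightarrow> bool" where
  "sandwiched \<alpha> K E \<longleftrightarrow> (\<lambda>x. inverse \<alpha> *\<^sub>R x) ` K \<subseteq> E \<and> E \<subseteq> (\<lambda>x. \<alpha> *\<^sub>R x) ` K"

end

theory Submission
  imports Defs
begin

definition sc :: "real \<Rightarrow> 'a::real_vector set \<Rightarrow> 'a set" where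
  "sc t S = (\<lambda>x. t *\<^sub>R x) ` S"

definition bal :: "'a::real_vector set \<Rightarrow> bool" where
  "bal K \<longleftrightarrow> convex K \<and> (\<forall>x\<in>K. - x \<in> K) \<and> K \<noteq> {}"

lemma bal_0: "bal K \<Longrightarrow> 0 \<in> K"
proof -
  assume b: "bal K"
  then obtain x where x: "x \<in> K" unfolding bal_def by auto
  then have "- x \<in> K" using b unfolding bal_def by auto
  then have "(1/2) *\<^sub>R x + (1/2) *\<^sub>R (-x) \<in> K"
    using b x unfolding bal_def by (intro convexD) auto
  then show ?thesis by simp
qed

lemma bal_smul1: assumes "bal K" "\<bar>c\<bar> \<le> 1" "x \<in> K" shows "c *\<^sub>R x \<in> K"
proof (cases "c \<ge> 0")
  case True
  have "c *\<^sub>R x + (1 - c) *\<^sub>R 0 \<in> K"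
    using assms True bal_0[OF assms(1)] unfolding bal_def by (intro convexD) auto
  then show ?thesis by simp
next
  case False
  have "- x \<in> K" using assms unfolding bal_def by auto
  then have "(-c) *\<^sub>R (-x) + (1 + c) *\<^sub>R 0 \<in> K"
    using assms False bal_0[OF assms(1)] unfolding bal_def by (intro convexD) auto
  then show ?thesis by simp
qed

lemma sc_smul: assumes "bal K" "\<bar>c\<bar> \<le> 1" "x \<in> sc t K" shows "c *\<^sub>R x \<in> sc t K"
proof -
  obtain k where k: "k \<in> K" "x = t *\<^sub>R k" using assms(3) unfolding sc_def by auto
  have "c *\<^sub>R k \<in> K" using bal_smul1[OF assms(1,2) k(1)] .
  moreover have "c *\<^sub>R x = t *\<^sub>R (c *\<^sub>R k)" using k by simp
  ultimately show ?thesis unfolding sc_def by (metis image_eqI)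
qed

lemma sc_add: assumes "bal K" "0 \<le> s" "0 \<le> t" "x \<in> sc s K" "y \<in> sc t K"
  shows "x + y \<in> sc (s + t) K"
proof -
  obtain k where k: "k \<in> K" "x = s *\<^sub>R k" using assms unfolding sc_def by auto
  obtain l where l: "l \<in> K" "y = t *\<^sub>R l" using assms unfolding sc_def by auto
  show ?thesis
  proof (cases "s + t = 0")
    case True
    then have "s = 0" "t = 0" using assms by auto
    then show ?thesis using k l bal_0[OF assms(1)] unfolding sc_def by (auto intro: image_eqI[where x=0])
  next
    case False
    then have st: "s + t > 0" using assms by auto
    have "(s/(s+t)) *\<^sub>R k + (t/(s+t)) *\<^sub>R l \<in> K"
      using assms k l st unfolding bal_def by (intro convexD) (auto simp: add_divide_distrib[symmetric])
    moreover have "x + y = (s+t) *\<^sub>R ((s/(s+t)) *\<^sub>R k + (t/(s+t)) *\<^sub>R l)"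
      using k l st by (simp add: scaleR_add_right)
    ultimately show ?thesis unfolding sc_def by auto
  qed
qed

lemma sc_one[simp]: "sc 1 S = S" unfolding sc_def by simp

lemma sc_sc: "sc a (sc b S) = sc (a * b) S"
  unfolding sc_def image_image by simp

lemma sc_mono: assumes "bal K" "0 \<le> s" "s \<le> t" shows "sc s K \<subseteq> sc t K"
proof
  fix x assume "x \<in> sc s K"
  then obtain k where k: "k \<in> K" "x = s *\<^sub>R k" unfolding sc_def by auto
  show "x \<in> sc t K"
  proof (cases "t = 0")
    case True then show ?thesis using k assms bal_0[OF assms(1)] unfolding sc_def by auto
  next
    case False
    then have t: "t > 0" using assms by auto
    have "(s/t) *\<^sub>R k \<in> K" using assms t k by (intro bal_smul1) auto
    moreover have "x = t *\<^sub>R ((s/t) *\<^sub>R k)" using k t by simp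
    ultimately show ?thesis unfolding sc_def by (metis image_eqI)
  qed
qed

lemma sc_subset: "S \<subseteq> T \<Longrightarrow> sc t S \<subseteq> sc t T" unfolding sc_def by auto

lemma sc_sum: assumes "bal K" "finite I" "\<forall>i\<in>I. 0 \<le> t i \<and> v i \<in> sc (t i) K"
  shows "sum v I \<in> sc (sum t I) K"
  using assms(2,3)
proof (induction I rule: finite_induct)
  case empty
  then show ?case using bal_0[OF assms(1)] unfolding sc_def by auto
next
  case (insert i I)
  then show ?case by (auto intro!: sc_add[OF assms(1)] sum_nonneg)
qed

lemma sc_linear: "linear A \<Longrightarrow> A ` sc t S = sc t (A ` S)"
  unfolding sc_def image_image by (simp add: linear_scale)

lemma ell_bal: fixes A :: "'a::euclidean_space \<Rightarrow> 'a" assumes "linear A" shows "bal (A ` cball 0 1)"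
proof -
  have "convex (A ` cball 0 1)" using assms by (intro convex_linear_image) (auto simp: convex_cball)
  moreover have "\<forall>x\<in>A ` cball 0 1. - x \<in> A ` cball 0 1"
  proof
    fix x assume "x \<in> A ` cball 0 1"
    then obtain z where z: "z \<in> cball 0 1" "x = A z" by auto
    then have "- z \<in> cball 0 1" by simp
    moreover have "- x = A (- z)" using z assms by (simp add: linear_neg)
    ultimately show "- x \<in> A ` cball 0 1" by blast
  qed
  moreover have "A ` cball 0 1 \<noteq> {}" by auto
  ultimately show ?thesis unfolding bal_def by auto
qed

lemma sum_orth:
  fixes u :: "nat \<Rightarrow> 'a::real_inner"
  assumes "\<forall>j<k. u j \<bullet> u i = (if j = i then 1 else 0)" "i < k"
  shows "(\<Sum>j<k. c j *\<^sub>R u j) \<bullet> u i = c i"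
proof -
  have "(\<Sum>j<k. c j *\<^sub>R u j) \<bullet> u i = (\<Sum>j<k. c j * (u j \<bullet> u i))"
    by (simp add: inner_sum_left)
  also have "\<dots> = (\<Sum>j<k. if j = i then c i else 0)"
    using assms(1) by (intro sum.cong) auto
  also have "\<dots> = c i" using assms(2) by simp
  finally show ?thesis .
qed

lemma geom2: "1 + (\<Sum>j<k. (2::real)^j) = 2^k"
  by (induction k) auto

lemma greedy_step:
  fixes K :: "'a::euclidean_space set" and u :: "nat \<Rightarrow> 'a"
  assumes K: "bal K" "compact K" "ball 0 \<rho> \<subseteq> K" "\<rho> > 0"
    and k: "k < DIM('a)"
    and orth: "\<forall>i<k. \<forall>j<k. u i \<bullet> u j = (if i = j then 1 else 0)"
    and pos: "\<forall>i<k. a i > 0 \<and> a i *\<^sub>R u i \<in> sc (2^i) K"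
    and bnd: "\<forall>y\<in>K. \<forall>i<k. \<bar>y \<bullet> u i\<bar> \<le> a i"
  shows "\<exists>v b. v \<bullet> v = 1 \<and> (\<forall>i<k. v \<bullet> u i = 0) \<and> b > 0 \<and> b *\<^sub>R v \<in> sc (2^k) K
     \<and> (\<forall>y\<in>K. \<bar>y \<bullet> v\<bar> \<le> b)"
proof -
  define p where "p y = y - (\<Sum>j<k. (y \<bullet> u j) *\<^sub>R u j)" for y
  have p_orth: "p y \<bullet> u i = 0" if "i < k" for y i
  proof -
    have "(\<Sum>j<k. (y \<bullet> u j) *\<^sub>R u j) \<bullet> u i = y \<bullet> u i"
      using orth that by (intro sum_orth) auto
    then show ?thesis unfolding p_def by (simp add: inner_diff_left)
  qed
  have p_lin: "linear p" unfolding p_def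
    by (intro linear_compose_sub linear_ident linear_compose_sum)
       (auto intro!: linearI simp: inner_add_left scaleR_add_left)
  have ex0: "\<exists>x0\<in>K. p x0 \<noteq> 0"
  proof (rule ccontr)
    assume "\<not> ?thesis"
    then have pK: "\<forall>y\<in>K. p y = 0" by auto
    have pz: "p z = 0" for z
    proof (cases "z = 0")
      case True then show ?thesis using p_lin linear_0 by blast
    next
      case False
      define c where "c = \<rho> / (2 * norm z)"
      have c: "c > 0" using K False by (auto simp: c_def)
      have "norm (c *\<^sub>R z) < \<rho>" using K False by (simp add: c_def)
      then have "c *\<^sub>R z \<in> K" using K(3) by (auto simp: dist_norm)
      then have "p (c *\<^sub>R z) = 0" using pK by blast
      then have "c *\<^sub>R p z = 0" using p_lin by (simp add: linear_scale)
      then show ?thesis using c by simp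
    qed
    have "Basis \<subseteq> span (u ` {..<k})"
    proof
      fix b :: 'a assume "b \<in> Basis"
      have "b = (\<Sum>j<k. (b \<bullet> u j) *\<^sub>R u j)" using pz[of b] unfolding p_def by simp
      also have "\<dots> \<in> span (u ` {..<k})"
        by (intro span_sum span_scale span_base) auto
      finally show "b \<in> span (u ` {..<k})" .
    qed
    then have "card (Basis :: 'a set) \<le> card (u ` {..<k})"
      using independent_span_bound[OF _ independent_Basis, of "u ` {..<k}"] by auto
    also have "\<dots> \<le> k" using card_image_le[of "{..<k}" u] by simp
    finally show False using k by simp
  qed
  then obtain x0 where x0: "x0 \<in> K" "p x0 \<noteq> 0" by auto
  have cont: "continuous_on K (\<lambda>y. norm (p y))" unfolding p_def
    by (intro continuous_intros)
  obtain x where x: "x \<in> K" "\<forall>y\<in>K. norm (p y) \<le> norm (p x)"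
    using continuous_attains_sup[OF K(2) _ cont] x0 by blast
  define b where "b = norm (p x)"
  have b: "b > 0" using x x0 unfolding b_def
    by (metis zero_less_norm_iff order_less_le_trans)
  define v where "v = (1 / b) *\<^sub>R p x"
  have vv: "v \<bullet> v = 1" using b unfolding v_def b_def
    by (simp add: power2_norm_eq_inner[symmetric] power2_eq_square)
  have vu: "\<forall>i<k. v \<bullet> u i = 0" unfolding v_def using p_orth by simp
  have nv: "norm v = 1" using vv by (simp add: norm_eq_sqrt_inner)
  have bv: "b *\<^sub>R v = p x" using b unfolding v_def by simp
  have yv: "\<bar>y \<bullet> v\<bar> \<le> b" if "y \<in> K" for y
  proof -
    have "(\<Sum>j<k. (y \<bullet> u j) *\<^sub>R u j) \<bullet> v = 0"
    proof -
      have "(\<Sum>j<k. (y \<bullet> u j) *\<^sub>R u j) \<bullet> v = (\<Sum>j<k. (y \<bullet> u j) * (u j \<bullet> v))"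
        by (simp add: inner_sum_left)
      also have "\<dots> = 0" using vu by (intro sum.neutral) (metis inner_commute mult_zero_right lessThan_iff)
      finally show ?thesis .
    qed
    then have "y \<bullet> v = p y \<bullet> v" unfolding p_def by (simp add: inner_diff_left)
    also have "\<bar>\<dots>\<bar> \<le> norm (p y) * norm v" by (rule Cauchy_Schwarz_ineq2)
    also have "\<dots> \<le> b" using x that nv unfolding b_def by simp
    finally show ?thesis .
  qed
  have terms: "\<forall>j\<in>{..<k}. 0 \<le> (2::real)^j \<and>
      (- (x \<bullet> u j) / a j) *\<^sub>R (a j *\<^sub>R u j) \<in> sc (2^j) K"
  proof
    fix j assume j: "j \<in> {..<k}"
    have aj: "a j > 0" "a j *\<^sub>R u j \<in> sc (2^j) K" using pos j by auto
    have "\<bar>x \<bullet> u j\<bar> \<le> a j" using bnd x(1) j by auto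
    moreover have "\<bar>- (x \<bullet> u j) / a j\<bar> = \<bar>x \<bullet> u j\<bar> / a j" using aj(1) by (simp add: abs_divide)
    ultimately have "\<bar>- (x \<bullet> u j) / a j\<bar> \<le> 1" using aj(1) by (simp add: divide_le_eq_1_pos)
    then have "(- (x \<bullet> u j) / a j) *\<^sub>R (a j *\<^sub>R u j) \<in> sc (2^j) K"
      by (rule sc_smul[OF K(1) _ aj(2)])
    then show "0 \<le> (2::real)^j \<and> (- (x \<bullet> u j) / a j) *\<^sub>R (a j *\<^sub>R u j) \<in> sc (2^j) K"
      by simp
  qed
  have sum_in: "(\<Sum>j<k. (- (x \<bullet> u j) / a j) *\<^sub>R (a j *\<^sub>R u j)) \<in> sc (\<Sum>j<k. 2^j) K"
    by (rule sc_sum[OF K(1) _ terms]) simp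
  have eq: "(\<Sum>j<k. (- (x \<bullet> u j) / a j) *\<^sub>R (a j *\<^sub>R u j)) = - (\<Sum>j<k. (x \<bullet> u j) *\<^sub>R u j)"
  proof -
    have "(\<Sum>j<k. (- (x \<bullet> u j) / a j) *\<^sub>R (a j *\<^sub>R u j)) = (\<Sum>j<k. - ((x \<bullet> u j) *\<^sub>R u j))"
      using pos by (intro sum.cong) auto
    then show ?thesis by (simp only: sum_negf)
  qed
  have "x + (\<Sum>j<k. (- (x \<bullet> u j) / a j) *\<^sub>R (a j *\<^sub>R u j)) \<in> sc (1 + (\<Sum>j<k. 2^j)) K"
    using x sum_in by (intro sc_add[OF K(1)]) (auto intro: sum_nonneg)
  then have "p x \<in> sc (2^k) K" unfolding geom2 eq p_def by simp
  then show ?thesis using vv vu b bv yv by metis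
qed

lemma greedy_all:
  fixes K :: "'a::euclidean_space set"
  assumes K: "bal K" "compact K" "ball 0 \<rho> \<subseteq> K" "\<rho> > 0"
  shows "k \<le> DIM('a) \<Longrightarrow> \<exists>u a. (\<forall>i<k. \<forall>j<k. u i \<bullet> u j = (if i = j then 1 else 0)) \<and>
     (\<forall>i<k. a i > 0 \<and> a i *\<^sub>R u i \<in> sc (2^i) K) \<and> (\<forall>y\<in>K. \<forall>i<k. \<bar>y \<bullet> u i\<bar> \<le> (a i :: real))"
proof (induction k)
  case 0
  then show ?case by auto
next
  case (Suc k)
  then obtain u a where ua: "\<forall>i<k. \<forall>j<k. u i \<bullet> u j = (if i = j then 1 else 0)"
     "\<forall>i<k. a i > 0 \<and> a i *\<^sub>R u i \<in> sc (2^i) K" "\<forall>y\<in>K. \<forall>i<k. \<bar>y \<bullet> u i\<bar> \<le> (a i :: real)"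
    by auto
  obtain v b where vb: "v \<bullet> v = 1" "\<forall>i<k. v \<bullet> u i = 0" "b > 0" "b *\<^sub>R v \<in> sc (2^k) K"
     "\<forall>y\<in>K. \<bar>y \<bullet> v\<bar> \<le> b"
    using greedy_step[OF K _ ua] Suc.prems by auto
  define u' where "u' = u(k := v)"
  define a' where "a' = a(k := b)"
  have "\<forall>i<Suc k. \<forall>j<Suc k. u' i \<bullet> u' j = (if i = j then 1 else 0)"
  proof (intro allI impI)
    fix i j assume ij: "i < Suc k" "j < Suc k"
    show "u' i \<bullet> u' j = (if i = j then 1 else 0)"
      using ij ua(1) vb(1,2) unfolding u'_def
      by (cases "i = k"; cases "j = k") (auto simp: inner_commute less_Suc_eq)
  qed
  moreover have "\<forall>i<Suc k. a' i > 0 \<and> a' i *\<^sub>R u' i \<in> sc (2^i) K"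
    using ua(2) vb(3,4) unfolding u'_def a'_def by (auto simp: less_Suc_eq)
  moreover have "\<forall>y\<in>K. \<forall>i<Suc k. \<bar>y \<bullet> u' i\<bar> \<le> a' i"
    using ua(3) vb(5) unfolding u'_def a'_def by (auto simp: less_Suc_eq)
  ultimately show ?case by blast
qed

lemma orth_expand:
  fixes u :: "nat \<Rightarrow> 'a::euclidean_space"
  assumes orth: "\<forall>i<DIM('a). \<forall>j<DIM('a). u i \<bullet> u j = (if i = j then 1 else 0)"
  shows "y = (\<Sum>i<DIM('a). (y \<bullet> u i) *\<^sub>R u i)"
proof (rule ccontr)
  let ?n = "DIM('a)"
  define z where "z = y - (\<Sum>i<?n. (y \<bullet> u i) *\<^sub>R u i)"
  assume "y \<noteq> (\<Sum>i<?n. (y \<bullet> u i) *\<^sub>R u i)"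
  then have z0: "z \<noteq> 0" unfolding z_def by simp
  have zu: "z \<bullet> u i = 0" if "i < ?n" for i
  proof -
    have "(\<Sum>j<?n. (y \<bullet> u j) *\<^sub>R u j) \<bullet> u i = y \<bullet> u i"
      using orth that by (intro sum_orth) auto
    then show ?thesis unfolding z_def by (simp add: inner_diff_left)
  qed
  define S where "S = insert z (u ` {..<?n})"
  have inj: "inj_on u {..<?n}"
  proof
    fix i j assume "i \<in> {..<?n}" "j \<in> {..<?n}" "u i = u j"
    then show "i = j" using orth by (metis lessThan_iff zero_neq_one)
  qed
  have znot: "z \<notin> u ` {..<?n}"
  proof
    assume "z \<in> u ` {..<?n}"
    then obtain i where "i < ?n" "z = u i" by auto
    then show False using zu[of i] orth by auto
  qed
  have "pairwise orthogonal S"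
    unfolding S_def pairwise_def orthogonal_def
    using orth zu by (auto simp: inner_commute)
  moreover have "0 \<notin> S" unfolding S_def using z0 orth by force
  ultimately have "independent S" by (rule pairwise_orthogonal_independent)
  then have "card S \<le> ?n" using independent_bound by auto
  moreover have "card S = Suc ?n" unfolding S_def using znot inj
    by (simp add: card_image)
  ultimately show False by simp
qed

lemma ball_in_K:
  fixes K :: "'a::euclidean_space set"
  assumes "K \<in> sym_convex_bodies"
  shows "\<exists>\<rho>>0. ball 0 \<rho> \<subseteq> K"
proof -
  have K: "convex K" "interior K \<noteq> {}" "\<forall>x\<in>K. - x \<in> K"
    using assms unfolding sym_convex_bodies_def by auto
  obtain x where "x \<in> interior K" using K by auto
  then obtain e where e: "e > 0" "ball x e \<subseteq> K" using mem_interior by blast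
  have "ball 0 e \<subseteq> K"
  proof
    fix y :: 'a assume "y \<in> ball 0 e"
    then have ny: "norm y < e" by simp
    have "dist x (x + y) < e" using ny by (simp add: dist_norm)
    then have "x + y \<in> K" using e by auto
    moreover have "dist x (x - y) < e" using ny by (simp add: dist_norm)
    then have "x - y \<in> K" using e by auto
    then have "y - x \<in> K" using K(3) by force
    ultimately have "(1/2) *\<^sub>R (x + y) + (1/2) *\<^sub>R (y - x) \<in> K"
      using K(1) by (intro convexD) auto
    moreover have "(1/2) *\<^sub>R (x + y) + (1/2) *\<^sub>R (y - x) = y"
    proof -
      have "(1/2) *\<^sub>R (x + y) + (1/2) *\<^sub>R (y - x) = (1/2) *\<^sub>R ((x + y) + (y - x))"
        by (simp only: scaleR_add_right)
      also have "(x + y) + (y - x) = 2 *\<^sub>R y" by (simp add: scaleR_2)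
      finally show ?thesis by simp
    qed
    ultimately show "y \<in> K" by simp
  qed
  then show ?thesis using e by blast
qed

lemma john_weak:
  fixes K :: "'a::euclidean_space set"
  assumes KK: "K \<in> sym_convex_bodies"
  shows "\<exists>A::'a \<Rightarrow> 'a. linear A \<and> bij A \<and> A ` cball 0 1 \<subseteq> sc (real DIM('a) * 2^DIM('a)) K
     \<and> K \<subseteq> sc (real DIM('a) * 2^DIM('a)) (A ` cball 0 1)"
proof -
  let ?n = "DIM('a)"
  define c where "c = real ?n * 2^?n"
  obtain \<rho> where \<rho>: "\<rho> > 0" "ball 0 \<rho> \<subseteq> K" using ball_in_K[OF KK] by auto
  have bK: "bal K" using KK unfolding sym_convex_bodies_def bal_def by auto
  have cK: "compact K" using KK unfolding sym_convex_bodies_def by auto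
  obtain u a where ua: "\<forall>i<?n. \<forall>j<?n. u i \<bullet> u j = (if i = j then 1 else 0)"
     "\<forall>i<?n. a i > 0 \<and> a i *\<^sub>R u i \<in> sc (2^i) K" "\<forall>y\<in>K. \<forall>i<?n. \<bar>y \<bullet> u i\<bar> \<le> (a i :: real)"
    using greedy_all[OF bK cK \<rho>(2,1), of ?n] by auto
  define D where "D y = (\<Sum>i<?n. (a i * (y \<bullet> u i)) *\<^sub>R u i)" for y
  define G where "G y = (\<Sum>i<?n. ((y \<bullet> u i) / a i) *\<^sub>R u i)" for y
  have orth': "\<forall>j<?n. u j \<bullet> u i = (if j = i then 1 else 0)" if "i < ?n" for i
    using ua(1) that by auto
  have Du: "D y \<bullet> u i = a i * (y \<bullet> u i)" if "i < ?n" for y i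
    unfolding D_def by (rule sum_orth[OF orth'[OF that] that])
  have Gu: "G y \<bullet> u i = (y \<bullet> u i) / a i" if "i < ?n" for y i
    unfolding G_def by (rule sum_orth[OF orth'[OF that] that])
  have DG: "D (G y) = y" for y
  proof -
    have "D (G y) = (\<Sum>i<?n. (y \<bullet> u i) *\<^sub>R u i)"
      unfolding D_def using ua(2) by (intro sum.cong) (auto simp: Gu)
    also have "\<dots> = y" using orth_expand[OF ua(1)] by simp
    finally show ?thesis .
  qed
  have GD: "G (D y) = y" for y
  proof -
    have "G (D y) = (\<Sum>i<?n. (y \<bullet> u i) *\<^sub>R u i)"
      unfolding G_def using ua(2) by (intro sum.cong) (auto simp: Du)
    also have "\<dots> = y" using orth_expand[OF ua(1)] by simp
    finally show ?thesis .
  qed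
  have linD: "linear D" unfolding D_def
    by (intro linear_compose_sum) (auto intro!: linearI simp: inner_add_left scaleR_add_left algebra_simps)
  have bijD: "bij D" by (rule o_bij[of G]) (auto simp: DG GD fun_eq_iff)
  have nu: "norm (u i) = 1" if "i < ?n" for i using ua(1) that by (simp add: norm_eq_sqrt_inner)
  have n1: "1 \<le> real ?n" using DIM_positive[where 'a='a] by linarith
  have c1: "1 \<le> c"
  proof -
    have "(1::real) \<le> 2^?n" by simp
    then have "1 * 1 \<le> real ?n * 2^?n" using n1 by (intro mult_mono) auto
    then show ?thesis unfolding c_def by simp
  qed
  have part1: "D ` cball 0 1 \<subseteq> sc c K"
  proof
    fix w assume "w \<in> D ` cball 0 1"
    then obtain z where z: "norm z \<le> 1" "w = D z" by auto
    have "\<forall>i\<in>{..<?n}. 0 \<le> (2::real)^i \<and> (z \<bullet> u i) *\<^sub>R (a i *\<^sub>R u i) \<in> sc (2^i) K"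
    proof
      fix i assume i: "i \<in> {..<?n}"
      have "\<bar>z \<bullet> u i\<bar> \<le> norm z * norm (u i)" by (rule Cauchy_Schwarz_ineq2)
      then have zi: "\<bar>z \<bullet> u i\<bar> \<le> 1" using z nu i by auto
      have "a i *\<^sub>R u i \<in> sc (2^i) K" using ua(2) i by auto
      then have zz: "(z \<bullet> u i) *\<^sub>R (a i *\<^sub>R u i) \<in> sc (2^i) K" by (rule sc_smul[OF bK zi])
      show "0 \<le> (2::real)^i \<and> (z \<bullet> u i) *\<^sub>R (a i *\<^sub>R u i) \<in> sc (2^i) K"
        by (rule conjI[OF _ zz]) simp
    qed
    then have "(\<Sum>i<?n. (z \<bullet> u i) *\<^sub>R (a i *\<^sub>R u i)) \<in> sc (\<Sum>i<?n. 2^i) K"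
      by (intro sc_sum[OF bK]) auto
    moreover have "(\<Sum>i<?n. (z \<bullet> u i) *\<^sub>R (a i *\<^sub>R u i)) = w"
      unfolding z D_def by (intro sum.cong) (auto simp: mult.commute)
    moreover have "(\<Sum>i<?n. (2::real)^i) \<le> c"
    proof -
      have "(\<Sum>i<?n. (2::real)^i) \<le> 2^?n" using geom2[of ?n] by linarith
      also have "\<dots> \<le> c" unfolding c_def using n1 by simp
      finally show ?thesis .
    qed
    ultimately show "w \<in> sc c K" using sc_mono[OF bK _ ] by (meson sum_nonneg zero_le_power zero_le_numeral subsetD)
  qed
  have part2: "K \<subseteq> sc c (D ` cball 0 1)"
  proof
    fix y assume y: "y \<in> K"
    have "norm (G y) \<le> (\<Sum>i<?n. norm (((y \<bullet> u i) / a i) *\<^sub>R u i))"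
      unfolding G_def by (rule norm_sum)
    also have "\<dots> \<le> (\<Sum>i<?n. 1)"
    proof (rule sum_mono)
      fix i assume i: "i \<in> {..<?n}"
      have "\<bar>y \<bullet> u i\<bar> \<le> a i" "a i > 0" using ua y i by auto
      then have "\<bar>y \<bullet> u i\<bar> / a i \<le> 1" by (simp add: divide_le_eq_1_pos)
      moreover have "norm (((y \<bullet> u i) / a i) *\<^sub>R u i) = \<bar>y \<bullet> u i\<bar> / a i"
        using nu i \<open>a i > 0\<close> by (simp add: abs_divide)
      ultimately show "norm (((y \<bullet> u i) / a i) *\<^sub>R u i) \<le> 1" by simp
    qed
    also have "\<dots> = real ?n" by simp
    also have "\<dots> \<le> c" unfolding c_def using n1 by simp
    finally have nG: "norm (G y) \<le> c" .
    have "norm ((1/c) *\<^sub>R G y) \<le> 1" using nG c1 by (simp add: divide_le_eq_1_pos)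
    moreover have "y = c *\<^sub>R D ((1/c) *\<^sub>R G y)" using linD c1 DG by (simp add: linear_scale)
    ultimately show "y \<in> sc c (D ` cball 0 1)" unfolding sc_def by (auto intro!: image_eqI)
  qed
  have "linear D \<and> bij D \<and> D ` cball 0 1 \<subseteq> sc c K \<and> K \<subseteq> sc c (D ` cball 0 1)"
    using linD bijD part1 part2 by (intro conjI)
  then show ?thesis unfolding c_def by (rule exI[where x=D])
qed

definition near :: "real \<Rightarrow> 'a::real_vector set \<Rightarrow> 'a set \<Rightarrow> bool" where
  "near t E F \<longleftrightarrow> E \<subseteq> sc t F \<and> F \<subseteq> sc t E"

lemma near_sym: "near t E F \<longleftrightarrow> near t F E" unfolding near_def by auto

definition CR :: "real \<Rightarrow> ('a::euclidean_space \<Rightarrow>\<^sub>L 'a) set" where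
  "CR R = {M. norm M \<le> R \<and> (\<forall>x. norm x \<le> 1 \<longrightarrow> (\<exists>w. norm w \<le> 1 \<and> x = R *\<^sub>R blinfun_apply M w))}"

lemma close_maps:
  fixes P Q :: "'a::euclidean_space \<Rightarrow>\<^sub>L 'a"
  assumes R: "R > 0" and Q: "\<forall>x. norm x \<le> 1 \<longrightarrow> (\<exists>w. norm w \<le> 1 \<and> x = R *\<^sub>R blinfun_apply Q w)"
    and PQ: "norm (P - Q) \<le> 1 / R"
  shows "blinfun_apply P ` cball 0 1 \<subseteq> sc 2 (blinfun_apply Q ` cball 0 1)"
proof
  fix y assume "y \<in> blinfun_apply P ` cball 0 1"
  then obtain z where z: "norm z \<le> 1" "y = blinfun_apply P z" by auto
  define v where "v = blinfun_apply (P - Q) z"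
  have "norm v \<le> norm (P - Q) * norm z" unfolding v_def by (rule norm_blinfun)
  also have "\<dots> \<le> 1 / R * 1" using z PQ R by (intro mult_mono) auto
  finally have nv: "norm v \<le> 1 / R" by simp
  have "norm (R *\<^sub>R v) \<le> 1" using nv R by (simp add: field_simps)
  then obtain w where w: "norm w \<le> 1" "R *\<^sub>R v = R *\<^sub>R blinfun_apply Q w" using Q by blast
  then have vw: "v = blinfun_apply Q w" using R by simp
  have "y = blinfun_apply Q z + v" unfolding z v_def by (simp add: blinfun.diff_left)
  also have "\<dots> = blinfun_apply Q (z + w)" using vw by (simp add: blinfun.add_right)
  also have "\<dots> = 2 *\<^sub>R blinfun_apply Q ((1/2) *\<^sub>R (z + w))" by (simp add: blinfun.scaleR_right)
  finally have y: "y = 2 *\<^sub>R blinfun_apply Q ((1/2) *\<^sub>R (z + w))" .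
  have "norm ((1/2) *\<^sub>R (z + w)) \<le> 1"
  proof -
    have "norm (z + w) \<le> 2" using z w norm_triangle_ineq[of z w] by linarith
    then show ?thesis by simp
  qed
  then show "y \<in> sc 2 (blinfun_apply Q ` cball 0 1)" unfolding sc_def using y by auto
qed

lemma near_to_CR:
  fixes A A' :: "'a::euclidean_space \<Rightarrow> 'a"
  assumes A: "linear A" "bij A" and A': "linear A'" "bij A'" and R: "R > 0"
    and nr: "near R (A ` cball 0 1) (A' ` cball 0 1)"
  defines "M \<equiv> inv A \<circ> A'"
  shows "Blinfun M \<in> CR R" "A \<circ> M = A'" "blinfun_apply (Blinfun M) = M"
proof -
  have linv: "linear (inv A)" using A by (simp add: inj_linear_imp_inv_linear bij_is_inj)
  have linM: "linear M" unfolding M_def using linv A' by (simp add: linear_compose)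
  show BM: "blinfun_apply (Blinfun M) = M"
    using linM by (simp add: bounded_linear_Blinfun_apply linear_conv_bounded_linear)
  show AM: "A \<circ> M = A'" unfolding M_def using A by (simp add: fun_eq_iff bij_inv_eq_iff) (metis bij_inv_eq_iff)
  have Ainj: "A x = A y \<Longrightarrow> x = y" for x y using A by (meson bij_is_inj injD)
  have AMx: "A (M x) = A' x" for x using AM by (metis comp_apply)
  have b1: "norm (M z) \<le> R" if "norm z \<le> 1" for z
  proof -
    have "A' z \<in> sc R (A ` cball 0 1)" using nr that unfolding near_def by auto
    then obtain w where w: "norm w \<le> 1" "A' z = R *\<^sub>R A w" unfolding sc_def by auto
    then have "A (M z) = A (R *\<^sub>R w)" using AMx A by (simp add: linear_scale)
    then have "M z = R *\<^sub>R w" by (rule Ainj)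
    then show ?thesis using w R by simp
  qed
  have nM: "norm (Blinfun M) \<le> R"
  proof (rule norm_blinfun_bound)
    show "0 \<le> R" using R by simp
    fix x
    show "norm (blinfun_apply (Blinfun M) x) \<le> R * norm x"
    proof (cases "x = 0")
      case True then show ?thesis using linM BM by (simp add: linear_0)
    next
      case False
      have "norm (M ((1 / norm x) *\<^sub>R x)) \<le> R" using False by (intro b1) simp
      then have "norm ((1 / norm x) *\<^sub>R M x) \<le> R" using linM by (simp add: linear_scale)
      then show ?thesis using False BM by (simp add: field_simps)
    qed
  qed
  have b2: "\<forall>x. norm x \<le> 1 \<longrightarrow> (\<exists>w. norm w \<le> 1 \<and> x = R *\<^sub>R blinfun_apply (Blinfun M) w)"
  proof (intro allI impI)
    fix x :: 'a assume x: "norm x \<le> 1"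
    have "A x \<in> sc R (A' ` cball 0 1)" using nr x unfolding near_def by auto
    then obtain w where w: "norm w \<le> 1" "A x = R *\<^sub>R A' w" unfolding sc_def by auto
    then have "A x = A (R *\<^sub>R M w)" using AMx A by (simp add: linear_scale)
    then have "x = R *\<^sub>R M w" by (rule Ainj)
    then show "\<exists>w. norm w \<le> 1 \<and> x = R *\<^sub>R blinfun_apply (Blinfun M) w" using w BM by auto
  qed
  show "Blinfun M \<in> CR R" unfolding CR_def using nM b2 by auto
qed

lemma packing:
  fixes R :: real assumes R: "R \<ge> 1"
  shows "\<exists>N::nat. \<forall>(S::'a::euclidean_space set set) (F::'a set). S \<subseteq> centred_ellipsoids \<longrightarrow>
     (\<forall>E\<in>S. \<forall>E'\<in>S. E \<noteq> E' \<longrightarrow> \<not> near 2 E E') \<longrightarrow> F \<in> centred_ellipsoids \<longrightarrow>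
     finite {E\<in>S. near R F E} \<and> card {E\<in>S. near R F E} \<le> N"
proof -
  define \<delta> where "\<delta> = 1 / (2 * R)"
  have \<delta>: "\<delta> > 0" using R by (simp add: \<delta>_def)
  have R0: "R > 0" using R by simp
  have cov: "cball (0::'a \<Rightarrow>\<^sub>L 'a) R \<subseteq> (\<Union>c\<in>cball 0 R. ball c (\<delta>/2))"
    using \<delta> by force
  obtain C where C: "C \<subseteq> cball (0::'a \<Rightarrow>\<^sub>L 'a) R" "finite C" "cball 0 R \<subseteq> (\<Union>c\<in>C. ball c (\<delta>/2))"
    using compactE_image[OF compact_cball _ cov] by auto
  show ?thesis
  proof (rule exI[of _ "card C"], intro allI impI)
    fix S :: "'a set set" and F :: "'a set"
    assume S: "S \<subseteq> centred_ellipsoids" and sep: "\<forall>E\<in>S. \<forall>E'\<in>S. E \<noteq> E' \<longrightarrow> \<not> near 2 E E'"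
      and F: "F \<in> centred_ellipsoids"
    obtain A :: "'a \<Rightarrow> 'a" where A: "linear A" "bij A" "F = A ` cball 0 1"
      using F unfolding centred_ellipsoids_def by auto
    define X where "X = {E\<in>S. near R F E}"
    define rep where "rep E = (SOME A'::'a\<Rightarrow>'a. linear A' \<and> bij A' \<and> E = A' ` cball 0 1)" for E :: "'a set"
    have rep: "linear (rep E) \<and> bij (rep E) \<and> E = rep E ` cball 0 1" if "E \<in> S" for E
    proof -
      have "\<exists>A'::'a\<Rightarrow>'a. linear A' \<and> bij A' \<and> E = A' ` cball 0 1"
        using S that unfolding centred_ellipsoids_def by auto
      then show ?thesis unfolding rep_def by (rule someI_ex)
    qed
    define Mf where "Mf E = Blinfun (inv A \<circ> rep E)" for E
    have Mf: "Mf E \<in> CR R" "A \<circ> (inv A \<circ> rep E) = rep E" "blinfun_apply (Mf E) = inv A \<circ> rep E"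
      if "E \<in> X" for E
    proof -
      have "E \<in> S" "near R F E" using that unfolding X_def by auto
      then have r: "linear (rep E)" "bij (rep E)" "E = rep E ` cball 0 1" using rep by auto
      have "near R (A ` cball 0 1) (rep E ` cball 0 1)" using \<open>near R F E\<close> A r by simp
      from near_to_CR[OF A(1,2) r(1,2) R0 this]
      show "Mf E \<in> CR R" "A \<circ> (inv A \<circ> rep E) = rep E" "blinfun_apply (Mf E) = inv A \<circ> rep E"
        unfolding Mf_def by auto
    qed
    have EA: "E = A ` (blinfun_apply (Mf E) ` cball 0 1)" if "E \<in> X" for E
    proof -
      have "E \<in> S" using that unfolding X_def by auto
      then have "E = rep E ` cball 0 1" using rep by auto
      also have "\<dots> = (A \<circ> (inv A \<circ> rep E)) ` cball 0 1" using Mf(2)[OF that] by simp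
      also have "\<dots> = A ` (blinfun_apply (Mf E) ` cball 0 1)" using Mf(3)[OF that] by (simp add: image_comp)
      finally show ?thesis .
    qed
    define g where "g E = (SOME c. c \<in> C \<and> Mf E \<in> ball c (\<delta>/2))" for E
    have g: "g E \<in> C \<and> Mf E \<in> ball (g E) (\<delta>/2)" if "E \<in> X" for E
    proof -
      have "norm (Mf E) \<le> R" using Mf(1)[OF that] unfolding CR_def by auto
      then have "Mf E \<in> cball 0 R" by simp
      then have "\<exists>c. c \<in> C \<and> Mf E \<in> ball c (\<delta>/2)" using C(3) by blast
      then show ?thesis unfolding g_def by (rule someI_ex)
    qed
    have sub: "blinfun_apply (Mf E1) ` cball 0 1 \<subseteq> sc 2 (blinfun_apply (Mf E2) ` cball 0 1)"
      if "E1 \<in> X" "E2 \<in> X" "g E1 = g E2" for E1 E2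
    proof (rule close_maps[OF R0])
      show "\<forall>x. norm x \<le> 1 \<longrightarrow> (\<exists>w. norm w \<le> 1 \<and> x = R *\<^sub>R blinfun_apply (Mf E2) w)"
        using Mf(1)[OF that(2)] unfolding CR_def by auto
      have "dist (Mf E1) (Mf E2) \<le> dist (g E1) (Mf E1) + dist (g E1) (Mf E2)"
        by (rule dist_triangle3)
      also have "\<dots> < \<delta>/2 + \<delta>/2" using g[OF that(1)] g[OF that(2)] that(3)
        by (intro add_strict_mono) auto
      also have "\<dots> \<le> 1 / R" using R by (simp add: \<delta>_def frac_le)
      finally show "norm (Mf E1 - Mf E2) \<le> 1 / R" by (simp add: dist_norm)
    qed
    have inj: "inj_on g X"
    proof
      fix E1 E2 assume E: "E1 \<in> X" "E2 \<in> X" "g E1 = g E2"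
      have "E1 \<subseteq> sc 2 E2"
      proof -
        have "E1 = A ` (blinfun_apply (Mf E1) ` cball 0 1)" using EA E by auto
        also have "\<dots> \<subseteq> A ` sc 2 (blinfun_apply (Mf E2) ` cball 0 1)"
          using sub[OF E] by (rule image_mono)
        also have "\<dots> = sc 2 E2" using EA[OF E(2)] sc_linear[OF A(1)] by simp
        finally show ?thesis .
      qed
      moreover have "E2 \<subseteq> sc 2 E1"
      proof -
        have "E2 = A ` (blinfun_apply (Mf E2) ` cball 0 1)" using EA E by auto
        also have "\<dots> \<subseteq> A ` sc 2 (blinfun_apply (Mf E1) ` cball 0 1)"
          using sub[OF E(2,1) E(3)[symmetric]] by (rule image_mono)
        also have "\<dots> = sc 2 E1" using EA[OF E(1)] sc_linear[OF A(1)] by simp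
        finally show ?thesis .
      qed
      ultimately have "near 2 E1 E2" unfolding near_def by auto
      then show "E1 = E2" using sep E unfolding X_def by auto
    qed
    have gX: "g ` X \<subseteq> C" using g by auto
    then have fX: "finite X" using inj C(2) by (meson finite_imageD finite_subset)
    have "card X \<le> card C" using card_inj_on_le[OF inj gX C(2)] .
    then show "finite {E\<in>S. near R F E} \<and> card {E\<in>S. near R F E} \<le> card C"
      using fX unfolding X_def by auto
  qed
qed

lemma near_refl:
  assumes "F \<in> (centred_ellipsoids :: 'a::euclidean_space set set)" "1 \<le> t"
  shows "near t F F"
proof -
  obtain A :: "'a \<Rightarrow> 'a" where A: "linear A" "F = A ` cball 0 1"
    using assms unfolding centred_ellipsoids_def by auto
  have "bal F" using ell_bal[OF A(1)] A(2) by simp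
  then have "sc 1 F \<subseteq> sc t F" using assms by (intro sc_mono) auto
  then show ?thesis unfolding near_def by simp
qed

lemma colouring:
  fixes R :: real and N :: nat
  assumes R: "R \<ge> 1"
    and pack: "\<forall>(S::'a::euclidean_space set set) (F::'a set). S \<subseteq> centred_ellipsoids \<longrightarrow>
     (\<forall>E\<in>S. \<forall>E'\<in>S. E \<noteq> E' \<longrightarrow> \<not> near 2 E E') \<longrightarrow> F \<in> centred_ellipsoids \<longrightarrow>
     finite {E\<in>S. near R F E} \<and> card {E\<in>S. near R F E} \<le> N"
  shows "\<exists>M :: ('a set \<times> nat) set. M \<subseteq> centred_ellipsoids \<times> {..<Suc N} \<and>
     (\<forall>p\<in>M. \<forall>q\<in>M. p \<noteq> q \<longrightarrow> \<not> near 2 (fst p) (fst q)) \<and>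
     (\<forall>p\<in>M. \<forall>q\<in>M. fst p \<noteq> fst q \<longrightarrow> snd p = snd q \<longrightarrow> \<not> near R (fst p) (fst q)) \<and>
     (\<forall>F\<in>centred_ellipsoids. \<exists>p\<in>M. near 2 F (fst p))"
proof -
  define Q where "Q = {M :: ('a set \<times> nat) set. M \<subseteq> centred_ellipsoids \<times> {..<Suc N} \<and>
     (\<forall>p\<in>M. \<forall>q\<in>M. p \<noteq> q \<longrightarrow> \<not> near 2 (fst p) (fst q)) \<and>
     (\<forall>p\<in>M. \<forall>q\<in>M. fst p \<noteq> fst q \<longrightarrow> snd p = snd q \<longrightarrow> \<not> near R (fst p) (fst q))}"
  have "\<forall>C\<in>chains Q. \<Union>C \<in> Q"
  proof
    fix C assume C: "C \<in> chains Q"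
    then have CQ: "C \<subseteq> Q" and ch: "chain\<^sub>\<subseteq> C" unfolding chains_def by auto
    have two: "\<exists>X\<in>C. p \<in> X \<and> q \<in> X" if pq: "p \<in> \<Union>C" "q \<in> \<Union>C" for p q
    proof -
      obtain X Y where "X \<in> C" "Y \<in> C" "p \<in> X" "q \<in> Y" using pq by auto
      then show ?thesis using ch unfolding chain_subset_def by blast
    qed
    have "\<Union>C \<subseteq> centred_ellipsoids \<times> {..<Suc N}"
    proof
      fix p assume "p \<in> \<Union>C"
      then obtain X where "X \<in> C" "p \<in> X" by auto
      moreover then have "X \<subseteq> centred_ellipsoids \<times> {..<Suc N}" using CQ unfolding Q_def by auto
      ultimately show "p \<in> centred_ellipsoids \<times> {..<Suc N}" by auto
    qed
    moreover have "\<forall>p\<in>\<Union>C. \<forall>q\<in>\<Union>C. p \<noteq> q \<longrightarrow> \<not> near 2 (fst p) (fst q)"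
    proof (intro ballI)
      fix p q assume "p \<in> \<Union>C" "q \<in> \<Union>C"
      then obtain X where X: "X \<in> C" "p \<in> X" "q \<in> X" using two by blast
      then have "X \<in> Q" using CQ by auto
      then have "\<forall>p\<in>X. \<forall>q\<in>X. p \<noteq> q \<longrightarrow> \<not> near 2 (fst p) (fst q)" unfolding Q_def by simp
      then show "p \<noteq> q \<longrightarrow> \<not> near 2 (fst p) (fst q)" using X by simp
    qed
    moreover have "\<forall>p\<in>\<Union>C. \<forall>q\<in>\<Union>C. fst p \<noteq> fst q \<longrightarrow> snd p = snd q \<longrightarrow> \<not> near R (fst p) (fst q)"
    proof (intro ballI)
      fix p q assume "p \<in> \<Union>C" "q \<in> \<Union>C"
      then obtain X where X: "X \<in> C" "p \<in> X" "q \<in> X" using two by blast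
      then have "X \<in> Q" using CQ by auto
      then have "\<forall>p\<in>X. \<forall>q\<in>X. fst p \<noteq> fst q \<longrightarrow> snd p = snd q \<longrightarrow> \<not> near R (fst p) (fst q)"
        unfolding Q_def by simp
      then show "fst p \<noteq> fst q \<longrightarrow> snd p = snd q \<longrightarrow> \<not> near R (fst p) (fst q)" using X by simp
    qed
    ultimately show "\<Union>C \<in> Q" unfolding Q_def by blast
  qed
  then obtain M where MQ: "M \<in> Q" and max: "\<forall>X\<in>Q. M \<subseteq> X \<longrightarrow> X = M"
    using Zorn_Lemma by blast
  have M: "M \<subseteq> centred_ellipsoids \<times> {..<Suc N}"
     "\<forall>p\<in>M. \<forall>q\<in>M. p \<noteq> q \<longrightarrow> \<not> near 2 (fst p) (fst q)"
     "\<forall>p\<in>M. \<forall>q\<in>M. fst p \<noteq> fst q \<longrightarrow> snd p = snd q \<longrightarrow> \<not> near R (fst p) (fst q)"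
    using MQ unfolding Q_def by auto
  have func: "c = c'" if "(E, c) \<in> M" "(E, c') \<in> M" for E c c'
  proof (rule ccontr)
    assume "c \<noteq> c'"
    then have "\<not> near 2 E E" using M(2) that by fastforce
    moreover have "E \<in> centred_ellipsoids" using M(1) that by auto
    ultimately show False using near_refl by fastforce
  qed
  have cover: "\<exists>p\<in>M. near 2 F (fst p)" if F: "F \<in> centred_ellipsoids" for F
  proof (rule ccontr)
    assume nc: "\<not> ?thesis"
    define S where "S = fst ` M"
    have S: "S \<subseteq> centred_ellipsoids" using M(1) unfolding S_def by auto
    have sepS: "\<forall>E\<in>S. \<forall>E'\<in>S. E \<noteq> E' \<longrightarrow> \<not> near 2 E E'"
      using M(2) unfolding S_def by force
    define X where "X = {E\<in>S. near R F E}"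
    have fX: "finite X" and cX: "card X \<le> N" using pack S sepS F unfolding X_def by auto
    define U where "U = {c. \<exists>E\<in>X. (E, c) \<in> M}"
    have "U \<subseteq> (\<lambda>E. SOME c. (E, c) \<in> M) ` X"
    proof
      fix c assume "c \<in> U"
      then obtain E where E: "E \<in> X" "(E, c) \<in> M" unfolding U_def by auto
      then have "(SOME c. (E, c) \<in> M) = c" using func by (metis someI)
      then show "c \<in> (\<lambda>E. SOME c. (E, c) \<in> M) ` X" using E by force
    qed
    then have "card U \<le> N" using fX cX by (meson card_image_le card_mono finite_imageI le_trans)
    then have "\<not> {..<Suc N} \<subseteq> U" using fX
      by (metis card_lessThan card_mono not_less_eq_eq \<open>U \<subseteq> _\<close> finite_imageI finite_subset)
    then obtain c where c: "c < Suc N" "c \<notin> U" by auto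
    define M' where "M' = insert (F, c) M"
    have notin: "(F, c) \<notin> M"
    proof
      assume "(F, c) \<in> M"
      moreover have "near 2 F F" using near_refl[OF F] by simp
      ultimately show False using nc by force
    qed
    have "M' \<in> Q"
    proof -
      have "M' \<subseteq> centred_ellipsoids \<times> {..<Suc N}" using M(1) F c unfolding M'_def by auto
      moreover have "\<forall>p\<in>M'. \<forall>q\<in>M'. p \<noteq> q \<longrightarrow> \<not> near 2 (fst p) (fst q)"
        using M(2) nc near_sym unfolding M'_def by fastforce
      moreover have "\<forall>p\<in>M'. \<forall>q\<in>M'. fst p \<noteq> fst q \<longrightarrow> snd p = snd q \<longrightarrow> \<not> near R (fst p) (fst q)"
      proof (intro ballI impI)
        fix p q assume pq: "p \<in> M'" "q \<in> M'" "fst p \<noteq> fst q" "snd p = snd q"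
        have nf: "\<not> near R F E" if "(E, c) \<in> M" for E
        proof
          assume "near R F E"
          then have "E \<in> X" using that unfolding X_def S_def by force
          then show False using c(2) that unfolding U_def by blast
        qed
        have p: "p = (F, c) \<or> p \<in> M" and q: "q = (F, c) \<or> q \<in> M" using pq unfolding M'_def by auto
        show "\<not> near R (fst p) (fst q)"
        proof (cases "p \<in> M")
          case pM: True
          show ?thesis
          proof (cases "q \<in> M")
            case True then show ?thesis using pM pq M(3) by blast
          next
            case False
            then have qF: "q = (F, c)" using q by auto
            then have "p = (fst p, c)" using pq by (cases p) auto
            then have "(fst p, c) \<in> M" using pM by simp
            then have "\<not> near R F (fst p)" by (rule nf)
            then show ?thesis using qF near_sym by auto
          qed
        next
          case False
          then have pF: "p = (F, c)" using p by auto
          then have qM: "q \<in> M" using q pq(3) by (metis)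
          then have "q = (fst q, c)" using pq pF by (cases q) auto
          then have "(fst q, c) \<in> M" using qM by simp
          then have "\<not> near R F (fst q)" by (rule nf)
          then show ?thesis using pF by auto
        qed
      qed
      ultimately show ?thesis unfolding Q_def by blast
    qed
    moreover have "M \<subseteq> M'" unfolding M'_def by auto
    ultimately have "M' = M" using max by blast
    then show False using notin unfolding M'_def by auto
  qed
  have cov: "\<forall>F\<in>centred_ellipsoids. \<exists>p\<in>M. near 2 F (fst p)" using cover by blast
  show ?thesis
    apply (rule exI[of _ M])
    apply (intro conjI)
       apply (rule M(1))
      apply (rule M(2))
     apply (rule M(3))
    apply (rule cov)
    done
qed

lemma sandwiched_sc:
  assumes "\<alpha> > 0"
  shows "sandwiched \<alpha> K E \<longleftrightarrow> K \<subseteq> sc \<alpha> E \<and> E \<subseteq> sc \<alpha> K"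
proof -
  have s: "sandwiched \<alpha> K E \<longleftrightarrow> sc (inverse \<alpha>) K \<subseteq> E \<and> E \<subseteq> sc \<alpha> K"
    unfolding sandwiched_def sc_def by simp
  have "sc (inverse \<alpha>) K \<subseteq> E \<longleftrightarrow> K \<subseteq> sc \<alpha> E"
  proof
    assume "sc (inverse \<alpha>) K \<subseteq> E"
    then have "sc \<alpha> (sc (inverse \<alpha>) K) \<subseteq> sc \<alpha> E" by (rule sc_subset)
    then show "K \<subseteq> sc \<alpha> E" using assms by (simp add: sc_sc)
  next
    assume "K \<subseteq> sc \<alpha> E"
    then have "sc (inverse \<alpha>) K \<subseteq> sc (inverse \<alpha>) (sc \<alpha> E)" by (rule sc_subset)
    then show "sc (inverse \<alpha>) K \<subseteq> E" using assms by (simp add: sc_sc)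
  qed
  then show ?thesis using s by blast
qed

lemma ell_bal': "E \<in> (centred_ellipsoids :: 'a::euclidean_space set set) \<Longrightarrow> bal E"
  unfolding centred_ellipsoids_def using ell_bal by blast

theorem lemma7p1:
  shows "\<exists>\<alpha>\<^sub>0 > (1::real). \<forall>\<alpha> \<ge> \<alpha>\<^sub>0.
     \<exists>(\<E>\<^sub>0 :: 'a::euclidean_space set set) (N :: nat) (col :: 'a set \<Rightarrow> nat).
       \<E>\<^sub>0 \<subseteq> centred_ellipsoids \<and>
       (\<forall>E\<in>\<E>\<^sub>0. col E < N) \<and>
       (\<forall>K\<in>sym_convex_bodies. \<exists>E\<in>\<E>\<^sub>0. sandwiched \<alpha> K E) \<and>
       (\<forall>K\<in>sym_convex_bodies. \<forall>E1\<in>\<E>\<^sub>0. \<forall>E2\<in>\<E>\<^sub>0.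
          col E1 = col E2 \<longrightarrow> sandwiched \<alpha> K E1 \<longrightarrow> sandwiched \<alpha> K E2 \<longrightarrow> E1 = E2)"
proof -
  define c where "c = real DIM('a) * 2^DIM('a)"
  have n1: "1 \<le> real DIM('a)" using DIM_positive[where 'a='a] by linarith
  have c1: "1 \<le> c"
  proof -
    have "(1::real) \<le> 2^DIM('a)" by simp
    then have "1 * 1 \<le> real DIM('a) * 2^DIM('a)" using n1 by (intro mult_mono) auto
    then show ?thesis unfolding c_def by simp
  qed
  have main: "\<exists>(\<E>\<^sub>0 :: 'a set set) (N :: nat) (col :: 'a set \<Rightarrow> nat).
       \<E>\<^sub>0 \<subseteq> centred_ellipsoids \<and>
       (\<forall>E\<in>\<E>\<^sub>0. col E < N) \<and>
       (\<forall>K\<in>sym_convex_bodies. \<exists>E\<in>\<E>\<^sub>0. sandwiched \<alpha> K E) \<and>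
       (\<forall>K\<in>sym_convex_bodies. \<forall>E1\<in>\<E>\<^sub>0. \<forall>E2\<in>\<E>\<^sub>0.
          col E1 = col E2 \<longrightarrow> sandwiched \<alpha> K E1 \<longrightarrow> sandwiched \<alpha> K E2 \<longrightarrow> E1 = E2)"
    if \<alpha>: "\<alpha> \<ge> 2 * c" for \<alpha>
  proof -
    have a0: "\<alpha> > 0" "\<alpha> \<ge> 1" using \<alpha> c1 by auto
    define R where "R = \<alpha> * \<alpha>"
    have "1 * 1 \<le> \<alpha> * \<alpha>" using a0 by (intro mult_mono) auto
    then have R1: "R \<ge> 1" unfolding R_def by simp
    obtain N where N: "\<forall>(S::'a set set) (F::'a set). S \<subseteq> centred_ellipsoids \<longrightarrow>
     (\<forall>E\<in>S. \<forall>E'\<in>S. E \<noteq> E' \<longrightarrow> \<not> near 2 E E') \<longrightarrow> F \<in> centred_ellipsoids \<longrightarrow>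
     finite {E\<in>S. near R F E} \<and> card {E\<in>S. near R F E} \<le> N"
      using packing[OF R1] by (rule exE)
    obtain M :: "('a set \<times> nat) set" where M: "M \<subseteq> centred_ellipsoids \<times> {..<Suc N}"
     "\<forall>p\<in>M. \<forall>q\<in>M. fst p \<noteq> fst q \<longrightarrow> snd p = snd q \<longrightarrow> \<not> near R (fst p) (fst q)"
     "\<forall>F\<in>centred_ellipsoids. \<exists>p\<in>M. near 2 F (fst p)"
      using colouring[OF R1 N] by (elim exE conjE) (rule that)
    define E0 where "E0 = fst ` M"
    define col where "col E = (SOME k. (E, k) \<in> M)" for E
    have colM: "(E, col E) \<in> M" if "E \<in> E0" for E
    proof -
      have "\<exists>k. (E, k) \<in> M" using that unfolding E0_def by force
      then show ?thesis unfolding col_def by (rule someI_ex)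
    qed
    have P1: "E0 \<subseteq> centred_ellipsoids" using M(1) unfolding E0_def by auto
    have P2: "\<forall>E\<in>E0. col E < Suc N" using colM M(1) by blast
    have P3: "\<forall>K\<in>sym_convex_bodies. \<exists>E\<in>E0. sandwiched \<alpha> K E"
    proof
      fix K :: "'a set" assume K: "K \<in> sym_convex_bodies"
      have bK: "bal K" using K unfolding sym_convex_bodies_def bal_def by auto
      obtain A :: "'a \<Rightarrow> 'a" where A: "linear A" "bij A" "A ` cball 0 1 \<subseteq> sc c K"
        "K \<subseteq> sc c (A ` cball 0 1)"
        using john_weak[OF K] unfolding c_def by blast
      define G where "G = A ` cball 0 1"
      have G: "G \<in> centred_ellipsoids" unfolding G_def centred_ellipsoids_def using A by blast
      obtain p where p: "p \<in> M" "near 2 G (fst p)" using M(3) G by blast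
      define F where "F = fst p"
      have F: "F \<in> E0" unfolding F_def E0_def using p by auto
      have bF: "bal F" using P1 F ell_bal' by blast
      have "F \<subseteq> sc 2 G" using p unfolding near_def F_def by auto
      also have "\<dots> \<subseteq> sc 2 (sc c K)" using A unfolding G_def by (intro sc_subset)
      also have "\<dots> = sc (2 * c) K" by (simp add: sc_sc)
      also have "\<dots> \<subseteq> sc \<alpha> K" using bK \<alpha> c1 by (intro sc_mono) auto
      finally have i1: "F \<subseteq> sc \<alpha> K" .
      have "K \<subseteq> sc c G" using A unfolding G_def by simp
      also have "\<dots> \<subseteq> sc c (sc 2 F)" using p unfolding near_def F_def by (intro sc_subset) auto
      also have "\<dots> = sc (2 * c) F" by (simp add: sc_sc mult.commute)
      also have "\<dots> \<subseteq> sc \<alpha> F" using bF \<alpha> c1 by (intro sc_mono) auto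
      finally have i2: "K \<subseteq> sc \<alpha> F" .
      show "\<exists>E\<in>E0. sandwiched \<alpha> K E" using F i1 i2 sandwiched_sc[OF a0(1)] by blast
    qed
    have P4: "\<forall>K\<in>sym_convex_bodies. \<forall>E1\<in>E0. \<forall>E2\<in>E0.
          col E1 = col E2 \<longrightarrow> sandwiched \<alpha> K E1 \<longrightarrow> sandwiched \<alpha> K E2 \<longrightarrow> E1 = E2"
    proof (intro ballI impI)
      fix K E1 E2 assume E: "E1 \<in> E0" "E2 \<in> E0" "col E1 = col E2"
        "sandwiched \<alpha> K E1" "sandwiched \<alpha> K E2"
      have s1: "K \<subseteq> sc \<alpha> E1" "E1 \<subseteq> sc \<alpha> K" using E(4) sandwiched_sc[OF a0(1)] by auto
      have s2: "K \<subseteq> sc \<alpha> E2" "E2 \<subseteq> sc \<alpha> K" using E(5) sandwiched_sc[OF a0(1)] by auto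
      have "E1 \<subseteq> sc R E2"
      proof -
        have "E1 \<subseteq> sc \<alpha> (sc \<alpha> E2)" using s1(2) sc_subset[OF s2(1)] by blast
        then show ?thesis by (simp add: sc_sc R_def)
      qed
      moreover have "E2 \<subseteq> sc R E1"
      proof -
        have "E2 \<subseteq> sc \<alpha> (sc \<alpha> E1)" using s2(2) sc_subset[OF s1(1)] by blast
        then show ?thesis by (simp add: sc_sc R_def)
      qed
      ultimately have nr: "near R E1 E2" unfolding near_def by simp
      show "E1 = E2"
      proof (rule ccontr)
        assume "E1 \<noteq> E2"
        then have "\<not> near R (fst (E1, col E1)) (fst (E2, col E2))"
          using M(2) colM[OF E(1)] colM[OF E(2)] E(3) by (metis fst_conv snd_conv)
        then show False using nr by simp
      qed
    qed
    show ?thesis using P1 P2 P3 P4 by blast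
  qed
  have "2 * c > 1" using c1 by simp
  then show ?thesis using main by blast
qed

end
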